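(* Let $k$ be a field, $e,h \geq 1$ integers, $1 \leq i \leq e$, and $M$ a finite-dimensional $k[T]/T^e$-module generated by at most $h$ elements. Assume $N \subseteq M$ is a $k[T]$-submodule with $T^i N = 0$ and $T^{e-i} M \subseteq N$. Regard $N$ as a $k[T]/T^i$-module and $M/N$ as a $k[T]/T^{e-i}$-module. Then $\mathrm{Hdg}(M) \geq \mathrm{Hdg}(N) \star \mathrm{Hdg}(M/N)$, i.e. $\mathrm{Hdg}(M)(x) \geq \mathrm{Hdg}(N) \star \mathrm{Hdg}(M/N)(x)$ for all $0 \le x \le h$.
   Context: For a $k[T]/T^m$-module $Q$ generated by at most $h$ elements, write $Q \simeq \bigoplus_{j=1}^h k[T]/T^{a_j}$ with $0 \leq a_j \leq m$; its Hodge polygon $\mathrm{Hdg}(Q)$ is the convex polygon on $[0,h]$ starting at the origin with slopes $\frac{a_1}{m}, \dots, \frac{a_h}{m}$ (each on an interval of length $1$, in increasing order); it lies in $\mathcal{P}_m$, the set of convex polygons on $[0,h]$ starting at the origin with integral breakpoint $x$-coordinates and slopes in $\frac1m\mathbb{Z}\cap[0,1]$. For $P_1 \in \mathcal{P}_{N_1}$ and $P_2 \in \mathcal{P}_{N_2}$, $P_1 \star P_2 \in \mathcal{P}_{N_1+N_2}$ is defined by $(P_1 \star P_2)(x) = \frac{1}{N_1+N_2}(N_1 P_1(x) + N_2 P_2(x))$. *)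

theory Defs
  imports Complex_Main
begin

text \<open>A k[T]-module is modelled as a k-subspace M of a k-vector space (type 'v with scalar
multiplication scale) together with a k-linear endomorphism T leaving M invariant.
For k[T]-submodules N of M, the predicate cyc_decomp scale T M N m a expresses
M/N = direct sum over j of k[T]/T^(a_j), each a_j at most m:
there are v_j in M with T^(a_j) v_j in N such that the vectors T^l v_j (l < a_j)
form a k-basis of M modulo N (linearly independent modulo N and spanning M together with N).
The module M itself is the case N = {0}.\<close>

definition cyc_decomp ::
  "('k::field \<Rightarrow> 'v::ab_group_add \<Rightarrow> 'v) \<Rightarrow> ('v \<Rightarrow> 'v) \<Rightarrow> 'v set \<Rightarrow> 'v set \<Rightarrow> nat \<Rightarrow> nat list \<Rightarrow> bool"
where
  "cyc_decomp scale T M N m a \<longleftrightarrow>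
     (\<forall>j<length a. a ! j \<le> m) \<and>
     (\<exists>v. length v = length a \<and> set v \<subseteq> M \<and>
        (\<forall>j<length a. (T ^^ (a ! j)) (v ! j) \<in> N) \<and>
        (\<forall>c. (\<Sum>p\<in>{(j, l). j < length a \<and> l < a ! j}. scale (c p) ((T ^^ snd p) (v ! fst p))) \<in> N
              \<longrightarrow> (\<forall>p\<in>{(j, l). j < length a \<and> l < a ! j}. c p = 0)) \<and>
        M \<subseteq> module.span scale
               (N \<union> (\<lambda>p. (T ^^ snd p) (v ! fst p)) ` {(j, l). j < length a \<and> l < a ! j}))"

definition hdg_poly :: "nat \<Rightarrow> nat list \<Rightarrow> real \<Rightarrow> real" where
  "hdg_poly m a x =
     (let s = sort a; n = nat \<lfloor>x\<rfloor> in
        (\<Sum>j<n. real (s ! j) / real m) + (x - real n) * (real (s ! n) / real m))"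

text \<open>Hdg of the k[T]/T^m-module M/N (generated by at most h elements), using a
decomposition into h cyclic summands (zero summands allowed).\<close>

definition Hdg ::
  "('k::field \<Rightarrow> 'v::ab_group_add \<Rightarrow> 'v) \<Rightarrow> ('v \<Rightarrow> 'v) \<Rightarrow> 'v set \<Rightarrow> 'v set \<Rightarrow> nat \<Rightarrow> nat \<Rightarrow> real \<Rightarrow> real"
where
  "Hdg scale T M N h m = hdg_poly m (SOME a. length a = h \<and> cyc_decomp scale T M N m a)"

definition poly_star :: "nat \<Rightarrow> (real \<Rightarrow> real) \<Rightarrow> nat \<Rightarrow> (real \<Rightarrow> real) \<Rightarrow> real \<Rightarrow> real" where
  "poly_star N1 P1 N2 P2 x = (real N1 * P1 x + real N2 * P2 x) / real (N1 + N2)"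

end

theory Submission
  imports Defs
begin

locale nilp = vector_space scale
  for scale :: "'k::field \<Rightarrow> 'v::ab_group_add \<Rightarrow> 'v" +
  fixes T :: "'v \<Rightarrow> 'v"
  assumes linT: "Vector_Spaces.linear scale scale T"
begin

lemma homT: "module_hom scale scale T"
  using linT by (simp add: module_hom_iff_linear)

lemma hom_pow: "module_hom scale scale (T ^^ n)"
proof -
  have h: "\<forall>x y. T (x + y) = T x + T y" "\<forall>c x. T (scale c x) = scale c (T x)"
    using homT by (auto simp: module_hom_iff)
  have "(\<forall>x y. (T ^^ n) (x + y) = (T ^^ n) x + (T ^^ n) y) \<and> (\<forall>c x. (T ^^ n) (scale c x) = scale c ((T ^^ n) x))"
    by (induction n) (auto simp: h)
  then show ?thesis by (simp add: module_hom_iff module_axioms)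
qed

lemma P_add: "(T ^^ n) (x + y) = (T ^^ n) x + (T ^^ n) y"
  using module_hom.add[OF hom_pow] by blast
lemma P_scale: "(T ^^ n) (scale c x) = scale c ((T ^^ n) x)"
  using module_hom.scale[OF hom_pow] by blast
lemma P_zero[simp]: "(T ^^ n) 0 = 0"
  using module_hom.zero[OF hom_pow] by blast
lemma P_diff: "(T ^^ n) (x - y) = (T ^^ n) x - (T ^^ n) y"
  using module_hom.diff[OF hom_pow] by blast
lemma P_sum: "(T ^^ n) (sum g S) = (\<Sum>a\<in>S. (T ^^ n) (g a))"
  using module_hom.sum[OF hom_pow] by blast
lemma P_span: "span ((T ^^ n) ` S) = (T ^^ n) ` (span S)"
  using module_hom.span_image[OF hom_pow] by blast
lemma P_subspace: "subspace S \<Longrightarrow> subspace ((T ^^ n) ` S)"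
  using module_hom.subspace_image[OF hom_pow] by blast
lemma P_comp: "(T ^^ a) ((T ^^ b) x) = (T ^^ (a + b)) x"
  by (simp add: funpow_add)

lemma P_inv: assumes "T ` S \<subseteq> S" "x \<in> S" shows "(T ^^ n) x \<in> S"
  using assms by (induction n) auto

definition fd :: "'v set \<Rightarrow> bool" where
  "fd S \<longleftrightarrow> (\<exists>B. finite B \<and> S \<subseteq> span B)"

lemma fd_subset: "fd S \<Longrightarrow> R \<subseteq> span S \<Longrightarrow> fd R"
proof -
  assume a: "fd S" "R \<subseteq> span S"
  then obtain B where B: "finite B" "S \<subseteq> span B" unfolding fd_def by blast
  have "span S \<subseteq> span B" using span_mono[OF B(2)] by (simp add: span_span)
  then show ?thesis using a(2) B(1) unfolding fd_def by blast
qed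

lemma fd_basis:
  assumes "fd S"
  obtains B where "finite B" "B \<subseteq> S" "independent B" "S \<subseteq> span B" "card B = dim S"
proof -
  obtain B where B: "B \<subseteq> S" "independent B" "S \<subseteq> span B" "card B = dim S"
    using basis_exists by blast
  from assms obtain C where C: "finite C" "S \<subseteq> span C" unfolding fd_def by blast
  have "B \<subseteq> span C" using B C by blast
  then have "finite B" using independent_span_bound[OF C(1) B(2)] by blast
  then show ?thesis using B that by blast
qed

lemma dim_mono': assumes "fd W" "V \<subseteq> span W" shows "dim V \<le> dim W"
proof -
  obtain B where B: "finite B" "B \<subseteq> W" "independent B" "W \<subseteq> span B" "card B = dim W"
    using fd_basis[OF assms(1)] by blast
  have "span W \<subseteq> span B" using span_mono[OF B(4)] by (simp add: span_span)
  then have "V \<subseteq> span B" using assms(2) by blast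
  then show ?thesis using dim_le_card[OF _ B(1)] B(5) by simp
qed

lemma dim_Un_le: assumes "finite A" "fd S" shows "dim (A \<union> S) \<le> card A + dim S"
proof -
  obtain B where B: "finite B" "B \<subseteq> S" "independent B" "S \<subseteq> span B" "card B = dim S"
    using fd_basis[OF assms(2)] by blast
  have "A \<union> S \<subseteq> span (A \<union> B)" using B(4) span_superset[of "A \<union> B"] span_mono[of B "A \<union> B"] by blast
  then have "dim (A \<union> S) \<le> card (A \<union> B)" using dim_le_card assms(1) B(1) by blast
  also have "\<dots> \<le> card A + card B" by (rule card_Un_le)
  finally show ?thesis using B(5) by simp
qed

definition indep_mod :: "'v set \<Rightarrow> ('a \<Rightarrow> 'v) \<Rightarrow> 'a set \<Rightarrow> bool" where
  "indep_mod N f P \<longleftrightarrow> (\<forall>c. (\<Sum>p\<in>P. scale (c p) (f p)) \<in> N \<longrightarrow> (\<forall>p\<in>P. c p = 0))"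

lemma indep_modD: "indep_mod N f P \<Longrightarrow> (\<Sum>p\<in>P. scale (c p) (f p)) \<in> N \<Longrightarrow> p \<in> P \<Longrightarrow> c p = 0"
  unfolding indep_mod_def by blast

lemma sum_single: "finite P \<Longrightarrow> p \<in> P \<Longrightarrow> (\<Sum>r\<in>P. scale (if r = p then 1 else 0) (f r)) = f p"
  by (simp add: if_distrib[of "\<lambda>c. scale c x" for x] cong: if_cong)

lemma indep_fwd:
  assumes N: "subspace N" and BN: "finite BN" "independent BN" "BN \<subseteq> N" "N \<subseteq> span BN"
    and P: "finite P" and ind: "indep_mod N f P"
  shows "inj_on f P" "f ` P \<inter> N = {}" "independent (BN \<union> f ` P)"
proof -
  show inj: "inj_on f P"
  proof (rule inj_onI, rule ccontr)
    fix p q assume pq: "p \<in> P" "q \<in> P" "f p = f q" "p \<noteq> q"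
    define c where "c r = (if r = p then 1 else 0) - (if r = q then 1 else (0::'k))" for r
    have "(\<Sum>r\<in>P. scale (c r) (f r)) = (\<Sum>r\<in>P. scale (if r = p then 1 else 0) (f r)) - (\<Sum>r\<in>P. scale (if r = q then 1 else 0) (f r))"
      unfolding c_def scale_left_diff_distrib by (simp add: sum_subtractf)
    also have "\<dots> = 0" using sum_single[OF P pq(1)] sum_single[OF P pq(2)] pq(3) by simp
    finally have "(\<Sum>r\<in>P. scale (c r) (f r)) \<in> N" using subspace_0[OF N] by simp
    then have "\<forall>r\<in>P. c r = 0" using ind unfolding indep_mod_def by blast
    then have "c p = 0" using pq(1) by blast
    then show False using pq(4) unfolding c_def by simp
  qed
  show disj: "f ` P \<inter> N = {}"
  proof (rule ccontr)
    assume "f ` P \<inter> N \<noteq> {}"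
    then obtain p where p: "p \<in> P" "f p \<in> N" by blast
    have "(\<Sum>r\<in>P. scale (if r = p then 1 else 0) (f r)) \<in> N" using sum_single[OF P p(1), of f] p(2) by simp
    moreover have H: "\<And>c. (\<Sum>p\<in>P. scale (c p) (f p)) \<in> N \<Longrightarrow> \<forall>p\<in>P. c p = 0"
      using ind unfolding indep_mod_def by blast
    ultimately have "\<forall>r\<in>P. (\<lambda>r. if r = p then 1 else (0::'k)) r = 0" by (intro H) simp
    then have "(\<lambda>r. if r = p then 1 else 0) p = (0::'k)" using p(1) by blast
    then show False by simp
  qed
  have fin: "finite (BN \<union> f ` P)" using BN P by simp
  show "independent (BN \<union> f ` P)"
  proof (rule independent_if_scalars_zero[OF fin])
    fix u x assume su: "(\<Sum>x\<in>BN \<union> f ` P. scale (u x) x) = 0" and x: "x \<in> BN \<union> f ` P"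
    have d: "BN \<inter> f ` P = {}" using disj BN(3) by blast
    have s1: "(\<Sum>x\<in>BN \<union> f ` P. scale (u x) x) = (\<Sum>x\<in>BN. scale (u x) x) + (\<Sum>x\<in>f ` P. scale (u x) x)"
      by (rule sum.union_disjoint) (use BN P d in auto)
    have s2: "(\<Sum>x\<in>f ` P. scale (u x) x) = (\<Sum>p\<in>P. scale (u (f p)) (f p))"
      using sum.reindex[OF inj] by simp
    have inN: "(\<Sum>x\<in>BN. scale (u x) x) \<in> N"
      by (rule subspace_sum[OF N]) (use BN(3) subspace_scale[OF N] in auto)
    have "(\<Sum>p\<in>P. scale (u (f p)) (f p)) = - (\<Sum>x\<in>BN. scale (u x) x)"
      using su s1 s2 by (simp add: eq_neg_iff_add_eq_0 add.commute)
    then have "(\<Sum>p\<in>P. scale (u (f p)) (f p)) \<in> N" using inN subspace_neg[OF N] by simp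
    then have z: "\<forall>p\<in>P. u (f p) = 0" using indep_modD[OF ind, of "\<lambda>p. u (f p)"] by blast
    then have "(\<Sum>x\<in>f ` P. scale (u x) x) = 0" using s2 by simp
    then have "(\<Sum>x\<in>BN. scale (u x) x) = 0" using su s1 by simp
    then have "\<forall>x\<in>BN. u x = 0" using independentD[OF BN(2) BN(1) subset_refl] by blast
    then show "u x = 0" using x z by blast
  qed
qed

lemma indep_rev:
  assumes N: "subspace N" and BN: "finite BN" "BN \<subseteq> N" "N \<subseteq> span BN"
    and P: "finite P" and inj: "inj_on f P" and d: "f ` P \<inter> BN = {}"
    and ind: "independent (BN \<union> f ` P)"
  shows "indep_mod N f P"
  unfolding indep_mod_def
proof (intro allI impI)
  fix c assume cN: "(\<Sum>p\<in>P. scale (c p) (f p)) \<in> N"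
  then have "(\<Sum>p\<in>P. scale (c p) (f p)) \<in> span BN" using BN by blast
  then obtain dd where dd: "(\<Sum>p\<in>P. scale (c p) (f p)) = (\<Sum>v\<in>BN. scale (dd v) v)"
    using span_finite[OF BN(1)] by auto
  define u where "u x = (if x \<in> f ` P then c (the_inv_into P f x) else - dd x)" for x
  have s1: "(\<Sum>x\<in>BN \<union> f ` P. scale (u x) x) = (\<Sum>x\<in>BN. scale (u x) x) + (\<Sum>x\<in>f ` P. scale (u x) x)"
    by (rule sum.union_disjoint) (use BN P d in auto)
  have s2: "(\<Sum>x\<in>f ` P. scale (u x) x) = (\<Sum>p\<in>P. scale (u (f p)) (f p))"
    using sum.reindex[OF inj] by simp
  also have "\<dots> = (\<Sum>p\<in>P. scale (c p) (f p))"
    by (rule sum.cong) (auto simp: u_def the_inv_into_f_f[OF inj])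
  finally have s2': "(\<Sum>x\<in>f ` P. scale (u x) x) = (\<Sum>v\<in>BN. scale (dd v) v)" using dd by simp
  have ux: "\<And>x. x \<in> BN \<Longrightarrow> u x = - dd x"
  proof -
    fix x assume "x \<in> BN"
    then have "x \<notin> f ` P" using d by blast
    then show "u x = - dd x" by (simp add: u_def)
  qed
  have s3: "(\<Sum>x\<in>BN. scale (u x) x) = - (\<Sum>v\<in>BN. scale (dd v) v)"
    by (simp add: ux sum_negf[symmetric])
  have "(\<Sum>x\<in>BN \<union> f ` P. scale (u x) x) = 0" using s1 s2' s3 by simp
  then have z: "\<forall>x\<in>BN \<union> f ` P. u x = 0"
    using independentD[OF ind _ subset_refl] BN(1) P by blast
  show "\<forall>p\<in>P. c p = 0"
  proof
    fix p assume p: "p \<in> P"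
    have "u (f p) = 0" using z p by blast
    then show "c p = 0" using p by (simp add: u_def the_inv_into_f_f[OF inj])
  qed
qed

lemma dim_mod:
  assumes N: "subspace N" "fd N" and P: "finite P" and ind: "indep_mod N f P"
  shows "dim (N \<union> f ` P) = dim N + card P"
proof -
  obtain BN where BN: "finite BN" "BN \<subseteq> N" "independent BN" "N \<subseteq> span BN" "card BN = dim N"
    using fd_basis[OF N(2)] by blast
  note fw = indep_fwd[OF N(1) BN(1) BN(3) BN(2) BN(4) P ind]
  have "span (N \<union> f ` P) = span (BN \<union> f ` P)"
    unfolding span_eq using BN(2,4) span_superset[of "BN \<union> f ` P"] span_superset[of "N \<union> f ` P"]
      span_mono[of BN "BN \<union> f ` P"] by blast
  then have "dim (N \<union> f ` P) = dim (BN \<union> f ` P)" by (rule span_eq_dim)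
  also have "\<dots> = card (BN \<union> f ` P)" by (rule dim_eq_card_independent[OF fw(3)])
  also have "\<dots> = card BN + card (f ` P)"
    by (rule card_Un_disjoint) (use BN P fw(2) in auto)
  also have "\<dots> = dim N + card P" using BN(5) card_image[OF fw(1)] by simp
  finally show ?thesis .
qed

lemma indep_mod_subset:
  assumes "indep_mod N f P" "Q \<subseteq> P" "finite P"
  shows "indep_mod N f Q"
  unfolding indep_mod_def
proof (intro allI impI ballI)
  fix c p assume c: "(\<Sum>p\<in>Q. scale (c p) (f p)) \<in> N" and p: "p \<in> Q"
  define c' where "c' r = (if r \<in> Q then c r else 0)" for r
  have "(\<Sum>r\<in>P. scale (c' r) (f r)) = (\<Sum>r\<in>Q. scale (c r) (f r))"
    by (rule sum.mono_neutral_cong_right) (use assms in \<open>auto simp: c'_def\<close>)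
  then have "c' p = 0" using indep_modD[OF assms(1), of c'] c p assms(2) by auto
  then show "c p = 0" using p by (simp add: c'_def)
qed

definition idx :: "nat list \<Rightarrow> (nat \<times> nat) set" where
  "idx a = {(j, l). j < length a \<and> l < a ! j}"

definition vec :: "'v list \<Rightarrow> nat \<times> nat \<Rightarrow> 'v" where
  "vec v p = (T ^^ snd p) (v ! fst p)"

definition dec :: "'v set \<Rightarrow> 'v set \<Rightarrow> nat \<Rightarrow> nat list \<Rightarrow> 'v list \<Rightarrow> bool" where
  "dec M N m a v \<longleftrightarrow> length v = length a \<and> (\<forall>j<length a. a ! j \<le> m) \<and> set v \<subseteq> M \<and>
     (\<forall>j<length a. (T ^^ (a ! j)) (v ! j) \<in> N) \<and> indep_mod N (vec v) (idx a) \<and>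
     M \<subseteq> span (N \<union> vec v ` idx a)"

lemma cyc_decomp_iff: "cyc_decomp scale T M N m a \<longleftrightarrow> (\<exists>v. dec M N m a v)"
  unfolding cyc_decomp_def dec_def idx_def vec_def indep_mod_def by auto

lemma card_idx_gen: "card {(j, l). j < (n::nat) \<and> t \<le> l \<and> l < a j} = (\<Sum>j<n. a j - t)"
proof -
  have "{(j, l). j < n \<and> t \<le> l \<and> l < a j} = Sigma {..<n} (\<lambda>j. {t..<a j})" by auto
  moreover have "card (Sigma {..<n} (\<lambda>j. {t..<a j})) = (\<Sum>j<n. card {t..<a j})"
    by (rule card_SigmaI) auto
  ultimately show ?thesis by simp
qed

lemma finite_idx: "finite (idx a)"
proof -
  have "idx a \<subseteq> {..<length a} \<times> {..<sum_list a + 1}"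
    unfolding idx_def using elem_le_sum_list[of _ a] by fastforce
  then show ?thesis by (rule finite_subset) simp
qed

definition Dm :: "'v set \<Rightarrow> 'v set \<Rightarrow> nat \<Rightarrow> nat" where
  "Dm M N t = dim M - dim ((T ^^ t) ` M \<union> N)"

lemma D_dims:
  assumes M: "subspace M" "fd M" "T ` M \<subseteq> M" and N: "subspace N" "N \<subseteq> M" "T ` N \<subseteq> N"
    and d: "dec M N m a v"
  shows "dim ((T ^^ t) ` M \<union> N) = dim N + (\<Sum>j<length a. a ! j - t)"
proof -
  define Pt where "Pt = {p \<in> idx a. t \<le> snd p}"
  have lv: "length v = length a" and vM: "set v \<subseteq> M" and top: "\<forall>j<length a. (T ^^ (a ! j)) (v ! j) \<in> N"
    and ind: "indep_mod N (vec v) (idx a)" and sp: "M \<subseteq> span (N \<union> vec v ` idx a)"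
    using d unfolding dec_def by auto
  have vjM: "j < length a \<Longrightarrow> (T ^^ k) (v ! j) \<in> M" for j k
  proof -
    assume j: "j < length a"
    then have "v ! j \<in> M" using vM lv nth_mem[of j v] by auto
    then show ?thesis using P_inv[OF M(3)] by blast
  qed
  have fdN: "fd N" using fd_subset[OF M(2)] N(2) span_superset[of M] by blast
  have indt: "indep_mod N (vec v) Pt"
    by (rule indep_mod_subset[OF ind _ finite_idx]) (auto simp: Pt_def)
  have finPt: "finite Pt" using finite_idx[of a] by (simp add: Pt_def)
  have sub1: "(T ^^ t) ` (N \<union> vec v ` idx a) \<subseteq> span (N \<union> vec v ` Pt)"
  proof
    fix y assume "y \<in> (T ^^ t) ` (N \<union> vec v ` idx a)"
    then consider (n) x where "x \<in> N" "y = (T ^^ t) x" | (p) j l where "(j, l) \<in> idx a" "y = (T ^^ t) (vec v (j, l))"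
      by auto
    then show "y \<in> span (N \<union> vec v ` Pt)"
    proof cases
      case n
      then have "y \<in> N" using P_inv[OF N(3)] by simp
      then show ?thesis by (simp add: span_base)
    next
      case p
      then have j: "j < length a" "l < a ! j" by (auto simp: idx_def)
      have y: "y = (T ^^ (t + l)) (v ! j)" using p by (simp add: vec_def P_comp)
      show ?thesis
      proof (cases "t + l < a ! j")
        case True
        then have "(j, t + l) \<in> Pt" using j by (auto simp: Pt_def idx_def)
        then have "y \<in> vec v ` Pt" using y by (force simp: vec_def)
        then show ?thesis by (simp add: span_base)
      next
        case False
        then have "y = (T ^^ (t + l - a ! j)) ((T ^^ (a ! j)) (v ! j))" using y by (simp add: P_comp)
        then have "y \<in> N" using P_inv[OF N(3)] top j by simp
        then show ?thesis by (simp add: span_base)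
      qed
    qed
  qed
  have "span ((T ^^ t) ` M \<union> N) = span (N \<union> vec v ` Pt)"
    unfolding span_eq
  proof
    show "(T ^^ t) ` M \<union> N \<subseteq> span (N \<union> vec v ` Pt)"
    proof -
      have "(T ^^ t) ` M \<subseteq> (T ^^ t) ` span (N \<union> vec v ` idx a)" using sp by blast
      also have "\<dots> = span ((T ^^ t) ` (N \<union> vec v ` idx a))" by (simp add: P_span)
      also have "\<dots> \<subseteq> span (N \<union> vec v ` Pt)"
        using span_mono[OF sub1] by (simp add: span_span)
      finally show ?thesis using span_superset[of "N \<union> vec v ` Pt"] by blast
    qed
    show "N \<union> vec v ` Pt \<subseteq> span ((T ^^ t) ` M \<union> N)"
    proof
      fix y assume "y \<in> N \<union> vec v ` Pt"
      then consider "y \<in> N" | j l where "(j, l) \<in> Pt" "y = vec v (j, l)" by auto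
      then show "y \<in> span ((T ^^ t) ` M \<union> N)"
      proof cases
        case 1 then show ?thesis by (simp add: span_base)
      next
        case 2
        then have j: "j < length a" "t \<le> l" by (auto simp: Pt_def idx_def)
        have "y = (T ^^ t) ((T ^^ (l - t)) (v ! j))" using 2 j by (simp add: vec_def P_comp)
        then have "y \<in> (T ^^ t) ` M" using vjM[OF j(1)] by blast
        then show ?thesis by (simp add: span_base)
      qed
    qed
  qed
  then have "dim ((T ^^ t) ` M \<union> N) = dim (N \<union> vec v ` Pt)" by (rule span_eq_dim)
  also have "\<dots> = dim N + card Pt" by (rule dim_mod[OF N(1) fdN finPt indt])
  also have "card Pt = (\<Sum>j<length a. a ! j - t)"
  proof -
    have "Pt = {(j, l). j < length a \<and> t \<le> l \<and> l < a ! j}" by (auto simp: Pt_def idx_def)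
    then show ?thesis using card_idx_gen[of "length a" t "\<lambda>j. a ! j"] by simp
  qed
  finally show ?thesis .
qed

lemma D_formula:
  assumes M: "subspace M" "fd M" "T ` M \<subseteq> M" and N: "subspace N" "N \<subseteq> M" "T ` N \<subseteq> N"
    and d: "dec M N m a v"
  shows "Dm M N t = (\<Sum>j<length a. min (a ! j) t)"
proof -
  have M0: "(T ^^ 0) ` M \<union> N = M" using N(2) by auto
  have M0': "M \<union> N = M" using N(2) by auto
  have e0: "dim M = dim N + (\<Sum>j<length a. a ! j)"
    using D_dims[OF assms, of 0] by (simp add: M0 M0')
  have et: "dim ((T ^^ t) ` M \<union> N) = dim N + (\<Sum>j<length a. a ! j - t)" by (rule D_dims[OF assms])
  have "(\<Sum>j<length a. a ! j) = (\<Sum>j<length a. min (a ! j) t) + (\<Sum>j<length a. a ! j - t)"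
    unfolding sum.distrib[symmetric] by (rule sum.cong) auto
  then show ?thesis unfolding Dm_def using e0 et by simp
qed

lemma fd_image: assumes "fd W" shows "fd ((T ^^ k) ` W)"
proof -
  obtain B where B: "finite B" "W \<subseteq> span B" using assms unfolding fd_def by blast
  have "(T ^^ k) ` W \<subseteq> (T ^^ k) ` span B" using B(2) by blast
  also have "\<dots> = span ((T ^^ k) ` B)" by (simp add: P_span)
  finally show ?thesis unfolding fd_def using B(1) by blast
qed

lemma fd_finite_indep: "fd W \<Longrightarrow> independent B \<Longrightarrow> B \<subseteq> span W \<Longrightarrow> finite B"
proof -
  assume a: "fd W" "independent B" "B \<subseteq> span W"
  obtain C where C: "finite C" "W \<subseteq> span C" using a(1) unfolding fd_def by blast
  have "span W \<subseteq> span C" using span_mono[OF C(2)] by (simp add: span_span)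
  then show "finite B" using independent_span_bound[OF C(1) a(2)] a(3) by blast
qed

lemma RN1:
  assumes W: "subspace W" "fd W"
  shows "dim {x\<in>W. (T ^^ k) x = 0} + dim ((T ^^ k) ` W) \<le> dim W"
proof -
  define K where "K = {x\<in>W. (T ^^ k) x = 0}"
  have fdK: "fd K" by (rule fd_subset[OF W(2)]) (use span_superset[of W] in \<open>auto simp: K_def\<close>)
  obtain BK where BK: "finite BK" "BK \<subseteq> K" "independent BK" "K \<subseteq> span BK" "card BK = dim K"
    using fd_basis[OF fdK] by blast
  have BKW: "BK \<subseteq> W" using BK(2) unfolding K_def by blast
  obtain BW where BW: "BK \<subseteq> BW" "BW \<subseteq> W" "independent BW" "W \<subseteq> span BW"
    by (rule maximal_independent_subset_extend[OF BKW BK(3)])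
  have finBW: "finite BW" by (rule fd_finite_indep[OF W(2) BW(3)]) (use BW(2) span_superset[of W] in blast)
  have cBW: "card BW = dim W" using basis_card_eq_dim[OF BW(2) BW(4) BW(3)] .
  have sub: "(T ^^ k) ` BW \<subseteq> span ((T ^^ k) ` (BW - BK))"
  proof
    fix y assume "y \<in> (T ^^ k) ` BW"
    then obtain b where b: "b \<in> BW" "y = (T ^^ k) b" by blast
    show "y \<in> span ((T ^^ k) ` (BW - BK))"
    proof (cases "b \<in> BK")
      case True
      then have "y = 0" using b BK(2) unfolding K_def by auto
      then show ?thesis by (simp add: span_zero)
    next
      case False
      then show ?thesis using b by (simp add: span_base)
    qed
  qed
  have "(T ^^ k) ` W \<subseteq> (T ^^ k) ` span BW" using BW(4) by blast
  also have "\<dots> = span ((T ^^ k) ` BW)" by (simp add: P_span)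
  also have "\<dots> \<subseteq> span ((T ^^ k) ` (BW - BK))" using span_mono[OF sub] by (simp add: span_span)
  finally have "dim ((T ^^ k) ` W) \<le> card ((T ^^ k) ` (BW - BK))"
    by (rule dim_le_card) (use finBW in simp)
  also have "\<dots> \<le> card (BW - BK)" using finBW by (simp add: card_image_le)
  also have "\<dots> = card BW - card BK" using BW(1) BK(1) by (simp add: card_Diff_subset)
  finally have "dim ((T ^^ k) ` W) \<le> card BW - card BK" .
  moreover have "card BK \<le> card BW" using card_mono[OF finBW BW(1)] .
  ultimately show ?thesis using cBW BK(5) unfolding K_def by simp
qed


lemma RN2:
  assumes N: "subspace N" "fd N"
  shows "dim N \<le> dim {x\<in>N. (T ^^ k) x = 0} + dim ((T ^^ k) ` N)"
proof -
  define K where "K = {x\<in>N. (T ^^ k) x = 0}"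
  define g where "g = T ^^ k"
  have fdK: "fd K" by (rule fd_subset[OF N(2)]) (use span_superset[of N] in \<open>auto simp: K_def\<close>)
  obtain BK where BK: "finite BK" "BK \<subseteq> K" "independent BK" "K \<subseteq> span BK" "card BK = dim K"
    using fd_basis[OF fdK] by blast
  have fdG: "fd (g ` N)" unfolding g_def by (rule fd_image[OF N(2)])
  obtain C where C: "finite C" "C \<subseteq> g ` N" "independent C" "g ` N \<subseteq> span C" "card C = dim (g ` N)"
    using fd_basis[OF fdG] by blast
  define pre where "pre c = (SOME x. x \<in> N \<and> g x = c)" for c
  have pre: "c \<in> C \<Longrightarrow> pre c \<in> N \<and> g (pre c) = c" for c
  proof -
    assume "c \<in> C"
    then have "\<exists>x. x \<in> N \<and> g x = c" using C(2) by blast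
    then show ?thesis unfolding pre_def by (rule someI_ex)
  qed
  have "N \<subseteq> span (BK \<union> pre ` C)"
  proof
    fix x assume x: "x \<in> N"
    then have "g x \<in> span C" using C(4) by blast
    then obtain u where u: "g x = (\<Sum>c\<in>C. scale (u c) c)" using span_finite[OF C(1)] by auto
    define y where "y = (\<Sum>c\<in>C. scale (u c) (pre c))"
    have yN: "y \<in> N" unfolding y_def
      by (rule subspace_sum[OF N(1)]) (simp add: pre subspace_scale[OF N(1)])
    have "g y = (\<Sum>c\<in>C. scale (u c) c)" unfolding y_def g_def P_sum P_scale using pre unfolding g_def by simp
    then have gy: "g y = g x" using u by simp
    have "x - y \<in> K" unfolding K_def using x yN subspace_diff[OF N(1)] gy unfolding g_def by (simp add: P_diff)
    then have "x - y \<in> span (BK \<union> pre ` C)" using BK(4) span_mono[of BK "BK \<union> pre ` C"] by blast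
    moreover have "y \<in> span (BK \<union> pre ` C)" unfolding y_def
      by (intro span_sum span_scale span_base) blast
    ultimately have "(x - y) + y \<in> span (BK \<union> pre ` C)" by (rule span_add)
    then show "x \<in> span (BK \<union> pre ` C)" by simp
  qed
  then have "dim N \<le> card (BK \<union> pre ` C)" by (rule dim_le_card) (use BK(1) C(1) in simp)
  also have "\<dots> \<le> card BK + card (pre ` C)" by (rule card_Un_le)
  also have "\<dots> \<le> card BK + card C" using card_image_le[OF C(1)] by simp
  finally show ?thesis using BK(5) C(5) unfolding K_def g_def by simp
qed

lemma dim_Un0: "dim (S \<union> {0}) = dim S"
proof -
  have "span (S \<union> {0}) = span S" by simp
  then show ?thesis by (rule span_eq_dim)
qed

lemma core:
  assumes M: "subspace M" "fd M" "T ` M \<subseteq> M" and N: "subspace N" "N \<subseteq> M" "T ` N \<subseteq> N"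
  shows "Dm N {0} t1 + Dm M N t2 \<le> Dm M {0} (t1 + t2)"
proof -
  define W where "W = span ((T ^^ t2) ` M \<union> N)"
  have WM: "W \<subseteq> M" unfolding W_def
    by (rule span_minimal[OF _ M(1)]) (use N(2) P_inv[OF M(3)] in blast)
  have fdW: "fd W" by (rule fd_subset[OF M(2)]) (use WM span_superset[of M] in blast)
  have fdN: "fd N" by (rule fd_subset[OF M(2)]) (use N(2) span_superset[of M] in blast)
  have dW: "dim W = dim ((T ^^ t2) ` M \<union> N)" unfolding W_def by simp
  have r1: "dim {x\<in>W. (T ^^ t1) x = 0} + dim ((T ^^ t1) ` W) \<le> dim W"
    by (rule RN1[OF _ fdW]) (simp add: W_def)
  have r2: "dim N \<le> dim {x\<in>N. (T ^^ t1) x = 0} + dim ((T ^^ t1) ` N)" by (rule RN2[OF N(1) fdN])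
  have r3: "dim {x\<in>N. (T ^^ t1) x = 0} + dim ((T ^^ t1) ` N) \<le> dim N" by (rule RN1[OF N(1) fdN])
  have kk: "dim {x\<in>N. (T ^^ t1) x = 0} \<le> dim {x\<in>W. (T ^^ t1) x = 0}"
  proof (rule dim_mono')
    show "fd {x\<in>W. (T ^^ t1) x = 0}" by (rule fd_subset[OF fdW]) (use span_superset[of W] in blast)
    have "N \<subseteq> W" unfolding W_def using span_superset[of "(T ^^ t2) ` M \<union> N"] by blast
    then show "{x\<in>N. (T ^^ t1) x = 0} \<subseteq> span {x\<in>W. (T ^^ t1) x = 0}" using span_superset[of "{x\<in>W. (T ^^ t1) x = 0}"] by blast
  qed
  have wm: "dim W \<le> dim M" by (rule dim_mono'[OF M(2)]) (use WM span_superset[of M] in blast)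
  have tt: "dim ((T ^^ (t1 + t2)) ` M) \<le> dim ((T ^^ t1) ` W)"
  proof (rule dim_mono'[OF fd_image[OF fdW]])
    have "(T ^^ (t1 + t2)) ` M \<subseteq> (T ^^ t1) ` W"
    proof
      fix y assume "y \<in> (T ^^ (t1 + t2)) ` M"
      then obtain x where x: "x \<in> M" "y = (T ^^ t1) ((T ^^ t2) x)" by (auto simp: P_comp)
      have "(T ^^ t2) x \<in> W" unfolding W_def using x(1) by (intro span_base) blast
      then show "y \<in> (T ^^ t1) ` W" using x(2) by blast
    qed
    then show "(T ^^ (t1 + t2)) ` M \<subseteq> span ((T ^^ t1) ` W)" using span_superset[of "(T ^^ t1) ` W"] by blast
  qed
  show ?thesis unfolding Dm_def dim_Un0 using r1 r2 r3 kk wm tt dW by linarith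
qed

lemma T_add: "T (x + y) = T x + T y" using module_hom.add[OF homT] by blast
lemma T_scale: "T (scale c x) = scale c (T x)" using module_hom.scale[OF homT] by blast
lemma T_sum: "T (sum g S) = (\<Sum>a\<in>S. T (g a))" using module_hom.sum[OF homT] by blast
lemma T_diff: "T (x - y) = T x - T y" using module_hom.diff[OF homT] by blast
lemma T_pow_pred: "1 \<le> k \<Longrightarrow> T ((T ^^ (k - 1)) x) = (T ^^ k) x"
proof -
  assume "1 \<le> k"
  then have "k = Suc (k - 1)" by simp
  then have "(T ^^ k) x = (T ^^ Suc (k - 1)) x" by simp
  then show ?thesis by simp
qed

lemma T_zero[simp]: "T 0 = 0" using module_hom.zero[OF homT] by blast
lemma T_pow_pred': "0 < k \<Longrightarrow> T ((T ^^ (k - Suc 0)) x) = (T ^^ k) x"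
  using T_pow_pred[of k x] by simp

lemma subspace_K:
  assumes "subspace M" "subspace N"
  shows "subspace {x\<in>M. T x \<in> N}"
  using assms unfolding subspace_def by (auto simp: T_add T_scale)

lemma g_indep:
  assumes M: "subspace M" "T ` M \<subseteq> M" and K: "subspace K"
    and d: "dec M K m a v" and pos: "\<forall>j<length a. 1 \<le> a ! j"
    and KN: "\<And>x. x \<in> M \<Longrightarrow> T x \<in> N \<Longrightarrow> x \<in> K"
  shows "indep_mod N (\<lambda>j. (T ^^ (a ! j)) (v ! j)) {..<length a}"
  unfolding indep_mod_def
proof (intro allI impI ballI)
  fix c j0 assume cN: "(\<Sum>j\<in>{..<length a}. scale (c j) ((T ^^ (a ! j)) (v ! j))) \<in> N"
    and j0: "j0 \<in> {..<length a}"
  have lv: "length v = length a" and vM: "set v \<subseteq> M" and indK: "indep_mod K (vec v) (idx a)"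
    using d unfolding dec_def by auto
  have vjM: "j < length a \<Longrightarrow> (T ^^ k) (v ! j) \<in> M" for j k
  proof -
    assume j: "j < length a"
    then have "v ! j \<in> M" using vM lv nth_mem[of j v] by auto
    then show ?thesis using P_inv[OF M(2)] by blast
  qed
  define y where "y = (\<Sum>j\<in>{..<length a}. scale (c j) ((T ^^ (a ! j - 1)) (v ! j)))"
  have Ty: "T y = (\<Sum>j\<in>{..<length a}. scale (c j) ((T ^^ (a ! j)) (v ! j)))"
    unfolding y_def T_sum T_scale using pos by (auto intro!: sum.cong simp: T_pow_pred')
  have yM: "y \<in> M" unfolding y_def
    by (rule subspace_sum[OF M(1)]) (simp add: subspace_scale[OF M(1)] vjM)
  have yK: "y \<in> K" using KN[OF yM] Ty cN by simp
  define c' where "c' p = (if snd p = a ! (fst p) - 1 then c (fst p) else 0)" for p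
  define D where "D = (\<lambda>j. (j, a ! j - 1)) ` {..<length a}"
  have Dsub: "D \<subseteq> idx a" unfolding D_def idx_def using pos by auto
  have "(\<Sum>p\<in>idx a. scale (c' p) (vec v p)) = (\<Sum>p\<in>D. scale (c' p) (vec v p))"
    by (rule sum.mono_neutral_cong_right[OF finite_idx Dsub]) (auto simp: D_def c'_def idx_def)
  also have "\<dots> = (\<Sum>j\<in>{..<length a}. scale (c' (j, a ! j - 1)) (vec v (j, a ! j - 1)))"
    unfolding D_def by (rule sum.reindex_cong[of "\<lambda>j. (j, a ! j - 1)"]) (auto simp: inj_on_def)
  also have "\<dots> = y" unfolding y_def by (simp add: c'_def vec_def)
  finally have "(\<Sum>p\<in>idx a. scale (c' p) (vec v p)) \<in> K" using yK by simp
  then have "c' (j0, a ! j0 - 1) = 0"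
    by (rule indep_modD[OF indK]) (use j0 pos in \<open>auto simp: idx_def\<close>)
  then show "c j0 = 0" by (simp add: c'_def)
qed

lemma exist_step:
  assumes M: "subspace M" "fd M" "T ` M \<subseteq> M" and N: "subspace N" "N \<subseteq> M" "T ` N \<subseteq> N"
    and d: "dec M {x\<in>M. T x \<in> N} m a v" and pos: "\<forall>j<length a. 1 \<le> a ! j"
  shows "\<exists>a2 v2. dec M N (Suc m) a2 v2 \<and> (\<forall>j<length a2. 1 \<le> a2 ! j)"
proof -
  define K where "K = {x\<in>M. T x \<in> N}"
  have sK: "subspace K" unfolding K_def by (rule subspace_K[OF M(1) N(1)])
  have NK: "N \<subseteq> K" using N unfolding K_def by blast
  have KM: "K \<subseteq> M" unfolding K_def by blast
  have fdK: "fd K" by (rule fd_subset[OF M(2)]) (use KM span_superset[of M] in blast)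
  have fdN: "fd N" by (rule fd_subset[OF M(2)]) (use N(2) span_superset[of M] in blast)
  define n where "n = length a"
  have lv: "length v = n" and am: "\<forall>j<n. a ! j \<le> m" and vM: "set v \<subseteq> M"
    and topK: "\<forall>j<n. (T ^^ (a ! j)) (v ! j) \<in> K" and indK: "indep_mod K (vec v) (idx a)"
    and spK: "M \<subseteq> span (K \<union> vec v ` idx a)"
    using d unfolding dec_def K_def n_def by auto
  define g where "g j = (T ^^ (a ! j)) (v ! j)" for j
  have gK: "j < n \<Longrightarrow> g j \<in> K" for j using topK g_def by simp
  have gind: "indep_mod N g {..<n}" unfolding g_def n_def
    by (rule g_indep[OF M(1) M(3) sK d[folded K_def] pos]) (simp add: K_def)
  obtain BN where BN: "finite BN" "BN \<subseteq> N" "independent BN" "N \<subseteq> span BN" "card BN = dim N"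
    using fd_basis[OF fdN] by blast
  note fw = indep_fwd[OF N(1) BN(1) BN(3) BN(2) BN(4) finite_lessThan gind]
  define S0 where "S0 = BN \<union> g ` {..<n}"
  have S0K: "S0 \<subseteq> K" unfolding S0_def using BN(2) NK gK by blast
  have indS0: "independent S0" unfolding S0_def by (rule fw(3))
  obtain BK where BK: "S0 \<subseteq> BK" "BK \<subseteq> K" "independent BK" "K \<subseteq> span BK"
    by (rule maximal_independent_subset_extend[OF S0K indS0])
  have finBK: "finite BK" by (rule fd_finite_indep[OF fdK BK(3)]) (use BK(2) span_superset[of K] in blast)
  obtain zs where zs: "set zs = BK - S0" "distinct zs"
    using finite_distinct_list[of "BK - S0"] finBK by auto
  define a2 where "a2 = map Suc a @ replicate (length zs) (1::nat)"
  define v2 where "v2 = v @ zs"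
  define n2 where "n2 = n + length zs"
  define hidx where "hidx j = (if j < n then (j, a ! j) else (j, 0::nat))" for j
  define h where "h j = (if j < n then g j else zs ! (j - n))" for j
  have la2: "length a2 = n2" unfolding a2_def n2_def n_def by simp
  have lv2: "length v2 = n2" unfolding v2_def n2_def using lv by simp
  have a2a: "j < n \<Longrightarrow> a2 ! j = Suc (a ! j)" for j unfolding a2_def n_def by (simp add: nth_append)
  have a2b: "n \<le> j \<Longrightarrow> j < n2 \<Longrightarrow> a2 ! j = 1" for j unfolding a2_def n2_def n_def by (simp add: nth_append)
  have v2a: "j < n \<Longrightarrow> v2 ! j = v ! j" for j unfolding v2_def using lv by (simp add: nth_append)
  have v2b: "n \<le> j \<Longrightarrow> v2 ! j = zs ! (j - n)" for j unfolding v2_def using lv by (simp add: nth_append)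
  have vecA: "p \<in> idx a \<Longrightarrow> vec v2 p = vec v p" for p
    using v2a by (auto simp: vec_def idx_def n_def)
  have vech: "j < n2 \<Longrightarrow> vec v2 (hidx j) = h j" for j
    by (cases "j < n") (auto simp: vec_def hidx_def h_def g_def v2a v2b)
  have idx2: "idx a2 = idx a \<union> hidx ` {..<n2}"
  proof
    show "idx a2 \<subseteq> idx a \<union> hidx ` {..<n2}"
    proof
      fix p assume "p \<in> idx a2"
      then obtain j l where p: "p = (j, l)" "j < n2" "l < a2 ! j" unfolding idx_def la2 by auto
      show "p \<in> idx a \<union> hidx ` {..<n2}"
      proof (cases "j < n")
        case True
        then have "l < Suc (a ! j)" using p a2a by simp
        then consider "l < a ! j" | "l = a ! j" by linarith
        then show ?thesis
        proof cases
          case 1 then show ?thesis using p True by (auto simp: idx_def n_def)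
        next
          case 2
          then have "p = hidx j" using p True by (simp add: hidx_def)
          then show ?thesis using p by blast
        qed
      next
        case False
        then have "l = 0" using p a2b by simp
        then have "p = hidx j" using p False by (simp add: hidx_def)
        then show ?thesis using p by blast
      qed
    qed
    show "idx a \<union> hidx ` {..<n2} \<subseteq> idx a2"
    proof
      fix p assume "p \<in> idx a \<union> hidx ` {..<n2}"
      then consider "p \<in> idx a" | j where "j < n2" "p = hidx j" by blast
      then show "p \<in> idx a2"
      proof cases
        case 1
        then obtain j l where "p = (j, l)" "j < n" "l < a ! j" unfolding idx_def n_def by auto
        then show ?thesis using a2a la2 n2_def by (auto simp: idx_def)
      next
        case 2
        then show ?thesis using a2a a2b la2 by (cases "j < n") (auto simp: idx_def hidx_def)
      qed
    qed
  qed
  have disj: "idx a \<inter> hidx ` {..<n2} = {}"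
    by (auto simp: idx_def hidx_def n_def split: if_splits)
  have injidx: "inj_on hidx {..<n2}"
    by (rule inj_onI) (auto simp: hidx_def split: if_splits)
  have gS0: "g ` {..<n} \<subseteq> S0" unfolding S0_def by blast
  have hset: "h ` {..<n2} = g ` {..<n} \<union> (BK - S0)"
  proof
    show "h ` {..<n2} \<subseteq> g ` {..<n} \<union> (BK - S0)"
    proof
      fix y assume "y \<in> h ` {..<n2}"
      then obtain j where j: "j < n2" "y = h j" by blast
      show "y \<in> g ` {..<n} \<union> (BK - S0)"
      proof (cases "j < n")
        case True then show ?thesis using j by (simp add: h_def)
      next
        case False
        then have "j - n < length zs" using j n2_def by simp
        then have "zs ! (j - n) \<in> set zs" by simp
        then show ?thesis using j False zs(1) by (simp add: h_def)
      qed
    qed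
    show "g ` {..<n} \<union> (BK - S0) \<subseteq> h ` {..<n2}"
    proof
      fix y assume "y \<in> g ` {..<n} \<union> (BK - S0)"
      then consider j where "j < n" "y = g j" | "y \<in> set zs" using zs(1) by blast
      then show "y \<in> h ` {..<n2}"
      proof cases
        case 1
        then have "y = h j" "j < n2" by (auto simp: h_def n2_def)
        then show ?thesis by blast
      next
        case 2
        then obtain k where k: "k < length zs" "y = zs ! k" by (auto simp: in_set_conv_nth)
        then have "y = h (n + k)" "n + k < n2" by (auto simp: h_def n2_def)
        then show ?thesis by blast
      qed
    qed
  qed
  have injH: "inj_on h {..<n2}"
  proof (rule inj_onI)
    fix i j assume i: "i \<in> {..<n2}" and j: "j \<in> {..<n2}" and e: "h i = h j"
    have zsnot: "k < n2 \<Longrightarrow> \<not> k < n \<Longrightarrow> h k \<notin> S0" for k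
    proof -
      assume "k < n2" "\<not> k < n"
      then have "k - n < length zs" using n2_def by simp
      then have "zs ! (k - n) \<in> set zs" by simp
      then show ?thesis using \<open>\<not> k < n\<close> zs(1) by (simp add: h_def)
    qed
    have gin: "k < n \<Longrightarrow> h k \<in> S0" for k using gS0 by (force simp: h_def)
    show "i = j"
    proof (cases "i < n"; cases "j < n")
      assume "i < n" "j < n"
      then show ?thesis using e fw(1) by (simp add: h_def inj_on_def)
    next
      assume "i < n" "\<not> j < n"
      then show ?thesis using e gin zsnot j by force
    next
      assume "\<not> i < n" "j < n"
      then show ?thesis using e gin zsnot i by force
    next
      assume a: "\<not> i < n" "\<not> j < n"
      then have "zs ! (i - n) = zs ! (j - n)" using e by (simp add: h_def)
      moreover have "i - n < length zs" "j - n < length zs" using i j n2_def a by auto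
      ultimately have "i - n = j - n" using zs(2) nth_eq_iff_index_eq by blast
      then show ?thesis using a by simp
    qed
  qed
  have hBN: "h ` {..<n2} \<inter> BN = {}" unfolding hset S0_def using fw(2) BN(2) by blast
  have BKeq: "BN \<union> h ` {..<n2} = BK" unfolding hset using BK(1) unfolding S0_def by blast
  have hind: "indep_mod N h {..<n2}"
    by (rule indep_rev[OF N(1) BN(1) BN(2) BN(4) finite_lessThan injH hBN]) (simp add: BKeq BK(3))
  have hK: "j < n2 \<Longrightarrow> h j \<in> K" for j
  proof -
    assume "j < n2"
    then have "h j \<in> h ` {..<n2}" by blast
    then show ?thesis using BKeq BK(2) by blast
  qed
  have ind2: "indep_mod N (vec v2) (idx a2)"
    unfolding indep_mod_def
  proof (intro allI impI ballI)
    fix c p assume cN: "(\<Sum>p\<in>idx a2. scale (c p) (vec v2 p)) \<in> N" and p: "p \<in> idx a2"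
    define s1 where "s1 = (\<Sum>p\<in>idx a. scale (c p) (vec v p))"
    define s2 where "s2 = (\<Sum>j\<in>{..<n2}. scale (c (hidx j)) (h j))"
    have "(\<Sum>p\<in>idx a2. scale (c p) (vec v2 p)) = (\<Sum>p\<in>idx a. scale (c p) (vec v2 p)) + (\<Sum>p\<in>hidx ` {..<n2}. scale (c p) (vec v2 p))"
      unfolding idx2 by (rule sum.union_disjoint[OF finite_idx _ disj]) simp
    also have "(\<Sum>p\<in>idx a. scale (c p) (vec v2 p)) = s1" unfolding s1_def
      by (rule sum.cong) (simp_all add: vecA)
    also have "(\<Sum>p\<in>hidx ` {..<n2}. scale (c p) (vec v2 p)) = s2" unfolding s2_def
      by (simp add: sum.reindex[OF injidx] vech)
    finally have sN: "s1 + s2 \<in> N" using cN by simp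
    have s2K: "s2 \<in> K" unfolding s2_def
      by (rule subspace_sum[OF sK]) (simp add: subspace_scale[OF sK] hK)
    have "s1 = (s1 + s2) - s2" by simp
    then have "s1 \<in> K" using sN NK s2K subspace_diff[OF sK] by (metis subsetD)
    then have c1: "\<forall>q\<in>idx a. c q = 0" using indep_modD[OF indK] unfolding s1_def by blast
    then have "s1 = 0" unfolding s1_def by simp
    then have "s2 \<in> N" using sN by simp
    then have c2: "\<forall>j\<in>{..<n2}. c (hidx j) = 0"
      using indep_modD[OF hind, of "\<lambda>j. c (hidx j)"] unfolding s2_def by blast
    show "c p = 0" using p c1 c2 unfolding idx2 by blast
  qed
  have sp2: "M \<subseteq> span (N \<union> vec v2 ` idx a2)"
  proof -
    let ?S = "span (N \<union> vec v2 ` idx a2)"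
    have "BK \<subseteq> ?S"
    proof
      fix x assume "x \<in> BK"
      then have "x \<in> BN \<union> h ` {..<n2}" using BKeq by simp
      then consider "x \<in> BN" | j where "j < n2" "x = h j" by blast
      then show "x \<in> ?S"
      proof cases
        case 1 then show ?thesis using BN(2) by (intro span_base) blast
      next
        case 2
        then have "x = vec v2 (hidx j)" "hidx j \<in> idx a2" using vech idx2 by auto
        then show ?thesis by (intro span_base) blast
      qed
    qed
    then have "span BK \<subseteq> ?S" by (rule span_minimal) simp
    then have "K \<subseteq> ?S" using BK(4) by blast
    moreover have "vec v ` idx a \<subseteq> ?S"
    proof
      fix x assume "x \<in> vec v ` idx a"
      then obtain q where q: "q \<in> idx a" "x = vec v q" by blast
      then have "x = vec v2 q" "q \<in> idx a2" using vecA idx2 by auto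
      then show "x \<in> ?S" by (intro span_base) blast
    qed
    ultimately have "span (K \<union> vec v ` idx a) \<subseteq> ?S" by (intro span_minimal) simp_all
    then show ?thesis using spK by blast
  qed
  have am2: "\<forall>j<length a2. a2 ! j \<le> Suc m"
  proof (intro allI impI)
    fix j assume "j < length a2"
    then show "a2 ! j \<le> Suc m" using am a2a a2b la2 by (cases "j < n") auto
  qed
  have pos2: "\<forall>j<length a2. 1 \<le> a2 ! j"
  proof (intro allI impI)
    fix j assume "j < length a2"
    then show "1 \<le> a2 ! j" using a2a a2b la2 by (cases "j < n") auto
  qed
  have vM2: "set v2 \<subseteq> M" unfolding v2_def using vM zs(1) BK(2) KM by auto
  have top2: "\<forall>j<length a2. (T ^^ (a2 ! j)) (v2 ! j) \<in> N"
  proof (intro allI impI)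
    fix j assume j: "j < length a2"
    show "(T ^^ (a2 ! j)) (v2 ! j) \<in> N"
    proof (cases "j < n")
      case True
      then have "(T ^^ (a2 ! j)) (v2 ! j) = T (g j)" by (simp add: a2a v2a g_def)
      then show ?thesis using gK[OF True] unfolding K_def by simp
    next
      case False
      then have "j - n < length zs" using j la2 n2_def by simp
      then have z: "zs ! (j - n) \<in> K" using zs(1) BK(2) nth_mem by blast
      have "(T ^^ (a2 ! j)) (v2 ! j) = T (zs ! (j - n))" using False j la2 by (simp add: a2b v2b)
      then show ?thesis using z unfolding K_def by simp
    qed
  qed
  have "dec M N (Suc m) a2 v2"
    unfolding dec_def using lv2 la2 am2 vM2 top2 ind2 sp2 by simp
  then show ?thesis using pos2 by blast
qed

lemma exist_dec:
  assumes M: "subspace M" "fd M" "T ` M \<subseteq> M" and N: "subspace N" "N \<subseteq> M" "T ` N \<subseteq> N"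
    and top: "(T ^^ m) ` M \<subseteq> N"
  shows "\<exists>a v. dec M N m a v \<and> (\<forall>j<length a. 1 \<le> a ! j)"
  using N top
proof (induction m arbitrary: N)
  case 0
  then have "M \<subseteq> N" by simp
  then have "dec M N 0 [] []" unfolding dec_def indep_mod_def idx_def using span_superset[of N] by auto
  then show ?case by (intro exI[of _ "[]"]) simp
next
  case (Suc m)
  define K where "K = {x\<in>M. T x \<in> N}"
  have sK: "subspace K" unfolding K_def by (rule subspace_K[OF M(1) Suc.prems(1)])
  have KM: "K \<subseteq> M" unfolding K_def by blast
  have TK: "T ` K \<subseteq> K" using Suc.prems M(3) unfolding K_def by blast
  have topK: "(T ^^ m) ` M \<subseteq> K"
  proof
    fix y assume "y \<in> (T ^^ m) ` M"
    then obtain x where x: "x \<in> M" "y = (T ^^ m) x" by blast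
    have "y \<in> M" using x P_inv[OF M(3)] by simp
    moreover have "T y \<in> N" using x Suc.prems(4) by auto
    ultimately show "y \<in> K" unfolding K_def by simp
  qed
  obtain a v where "dec M K m a v" "\<forall>j<length a. 1 \<le> a ! j"
    using Suc.IH[OF sK KM TK topK] by blast
  then show ?case using exist_step[OF M Suc.prems(1-3)] unfolding K_def by blast
qed

lemma dec_pad:
  assumes N: "subspace N" and M: "subspace M" and d: "dec M N m a v"
  shows "dec M N m (a @ replicate k 0) (v @ replicate k 0)"
proof -
  have lv: "length v = length a" using d unfolding dec_def by simp
  have idxe: "idx (a @ replicate k 0) = idx a"
    by (auto simp: idx_def nth_append split: if_splits)
  have vece: "p \<in> idx a \<Longrightarrow> vec (v @ replicate k 0) p = vec v p" for p
    using lv by (auto simp: vec_def idx_def nth_append)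
  have vi: "vec (v @ replicate k 0) ` idx a = vec v ` idx a" using vece by (auto simp: image_def)
  have ind: "indep_mod N (vec (v @ replicate k 0)) (idx a)"
    using d unfolding dec_def indep_mod_def by (simp add: vece cong: sum.cong)
  show ?thesis
    using d lv ind vi subspace_0[OF N] subspace_0[OF M] unfolding dec_def idxe
    by (auto simp: nth_append)
qed

lemma Hdg_props:
  assumes M: "subspace M" "fd M" "T ` M \<subseteq> M" and N: "subspace N" "N \<subseteq> M" "T ` N \<subseteq> N"
    and top: "(T ^^ m) ` M \<subseteq> N" and hb: "Dm M N 1 \<le> h"
  shows "length (SOME a. length a = h \<and> cyc_decomp scale T M N m a) = h \<and>
         (\<forall>j<h. (SOME a. length a = h \<and> cyc_decomp scale T M N m a) ! j \<le> m) \<and>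
         (\<forall>t. Dm M N t = (\<Sum>j<h. min ((SOME a. length a = h \<and> cyc_decomp scale T M N m a) ! j) t))"
proof -
  obtain a v where d: "dec M N m a v" and pos: "\<forall>j<length a. 1 \<le> a ! j"
    using exist_dec[OF M N top] by blast
  have "Dm M N 1 = (\<Sum>j<length a. min (a ! j) 1)" by (rule D_formula[OF M N d])
  also have "\<dots> = (\<Sum>j<length a. 1)" using pos by (intro sum.cong) auto
  finally have la: "length a \<le> h" using hb by simp
  have "dec M N m (a @ replicate (h - length a) 0) (v @ replicate (h - length a) 0)"
    by (rule dec_pad[OF N(1) M(1) d])
  then have ex: "\<exists>a'. length a' = h \<and> cyc_decomp scale T M N m a'"
    using la unfolding cyc_decomp_iff by (intro exI[of _ "a @ replicate (h - length a) 0"]) auto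
  define A where "A = (SOME a. length a = h \<and> cyc_decomp scale T M N m a)"
  have A: "length A = h \<and> cyc_decomp scale T M N m A" unfolding A_def by (rule someI_ex[OF ex])
  then obtain V where dA: "dec M N m A V" unfolding cyc_decomp_iff by blast
  have "\<forall>j<h. A ! j \<le> m" using dA A unfolding dec_def by auto
  moreover have "\<forall>t. Dm M N t = (\<Sum>j<h. min (A ! j) t)" using D_formula[OF M N dA] A by simp
  ultimately show ?thesis using A unfolding A_def by blast
qed

end
lemma C1:
  fixes s :: "nat list"
  assumes "length s = h" "n \<le> h"
  shows "(\<Sum>j<h. min (s ! j) t) \<le> (\<Sum>j<n. s ! j) + (h - n) * t"
proof -
  have sp: "{..<h} = {..<n} \<union> {n..<h}" using assms by auto
  have "(\<Sum>j<h. min (s ! j) t) = (\<Sum>j<n. min (s ! j) t) + (\<Sum>j\<in>{n..<h}. min (s ! j) t)"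
    unfolding sp by (rule sum.union_disjoint) auto
  also have "\<dots> \<le> (\<Sum>j<n. s ! j) + (\<Sum>j\<in>{n..<h}. t)"
    by (intro add_mono sum_mono) auto
  finally show ?thesis by simp
qed

lemma C2:
  fixes s :: "nat list"
  assumes "sorted s" "length s = h" "n \<le> h"
  shows "\<exists>t. (\<Sum>j<h. min (s ! j) t) = (\<Sum>j<n. s ! j) + (h - n) * t"
proof (cases "n < h")
  case True
  let ?t = "s ! n"
  have sp: "{..<h} = {..<n} \<union> {n..<h}" using assms by auto
  have "(\<Sum>j<h. min (s ! j) ?t) = (\<Sum>j<n. min (s ! j) ?t) + (\<Sum>j\<in>{n..<h}. min (s ! j) ?t)"
    unfolding sp by (rule sum.union_disjoint) auto
  also have "(\<Sum>j<n. min (s ! j) ?t) = (\<Sum>j<n. s ! j)"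
    using assms True by (intro sum.cong) (auto simp: sorted_iff_nth_mono min_def)
  also have "(\<Sum>j\<in>{n..<h}. min (s ! j) ?t) = (\<Sum>j\<in>{n..<h}. ?t)"
    using assms True by (intro sum.cong) (auto simp: sorted_iff_nth_mono min_def intro: le_antisym)
  finally show ?thesis by auto
next
  case False
  then have nh: "n = h" using assms by simp
  let ?t = "Max (set s)"
  have "(\<Sum>j<h. min (s ! j) ?t) = (\<Sum>j<h. s ! j)"
    using assms by (intro sum.cong) (auto simp: min_def)
  then show ?thesis using nh by auto
qed

lemma sum_sort:
  fixes a :: "nat list"
  shows "(\<Sum>j<length a. f (a ! j)) = (\<Sum>j<length a. f (sort a ! j))"
proof -
  have e: "(\<Sum>j<length xs. f (xs ! j)) = sum_list (map f xs)" for xs :: "nat list"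
    by (simp add: sum_list_sum_nth atLeast0LessThan)
  have "sum_list (map f (sort a)) = sum_list (map f a)"
  proof -
    have ins: "sum_list (map f (insort x ys)) = f x + sum_list (map f ys)" for x ys
      by (induction ys) (auto simp: add.left_commute)
    show ?thesis by (induction a) (auto simp: ins)
  qed
  then show ?thesis using e[of a] e[of "sort a"] by simp
qed

lemma int_ineq:
  fixes A B C :: "nat list"
  assumes l: "length A = h" "length B = h" "length C = h"
    and DA: "\<forall>t. DA t = (\<Sum>j<h. min (A ! j) t)"
    and DB: "\<forall>t. DB t = (\<Sum>j<h. min (B ! j) t)"
    and DC: "\<forall>t. DC t = (\<Sum>j<h. min (C ! j) t)"
    and core: "\<forall>t1 t2. DB t1 + DC t2 \<le> DA (t1 + t2)"
    and n: "n \<le> h"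
  shows "(\<Sum>j<n. sort B ! j) + (\<Sum>j<n. sort C ! j) \<le> (\<Sum>j<n. sort A ! j)"
proof -
  have ss: "(\<Sum>j<h. min (X ! j) t) = (\<Sum>j<h. min (sort X ! j) t)" if "length X = h" for X :: "nat list" and t
    using sum_sort[of "\<lambda>x. min x t" X] that by simp
  obtain t1 where t1: "(\<Sum>j<h. min (sort B ! j) t1) = (\<Sum>j<n. sort B ! j) + (h - n) * t1"
    using C2[of "sort B" h n] l n by auto
  obtain t2 where t2: "(\<Sum>j<h. min (sort C ! j) t2) = (\<Sum>j<n. sort C ! j) + (h - n) * t2"
    using C2[of "sort C" h n] l n by auto
  have a: "(\<Sum>j<h. min (sort A ! j) (t1 + t2)) \<le> (\<Sum>j<n. sort A ! j) + (h - n) * (t1 + t2)"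
    using C1[of "sort A" h n] l n by auto
  have "DB t1 + DC t2 \<le> DA (t1 + t2)" using core by blast
  then have "(\<Sum>j<n. sort B ! j) + (h - n) * t1 + ((\<Sum>j<n. sort C ! j) + (h - n) * t2)
      \<le> (\<Sum>j<n. sort A ! j) + (h - n) * (t1 + t2)"
    using DA DB DC ss[OF l(1)] ss[OF l(2)] ss[OF l(3)] t1 t2 a by simp
  then show ?thesis by (simp add: add_mult_distrib2)
qed

lemma hdg_eq:
  fixes a :: "nat list"
  assumes am: "\<forall>j<length a. a ! j \<le> m" and x: "0 \<le> x" "x \<le> real (length a)"
  shows "real m * hdg_poly m a x = (\<Sum>j<nat \<lfloor>x\<rfloor>. real (sort a ! j)) + (x - real (nat \<lfloor>x\<rfloor>)) * real (sort a ! nat \<lfloor>x\<rfloor>)"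
proof -
  let ?n = "nat \<lfloor>x\<rfloor>"
  have sa: "j < length a \<Longrightarrow> sort a ! j \<le> m" for j
  proof -
    assume "j < length a"
    then have "sort a ! j \<in> set a" using nth_mem[of j "sort a"] by simp
    then show ?thesis using am by (auto simp: in_set_conv_nth)
  qed
  have nle: "?n \<le> length a" using x by (simp add: nat_le_iff floor_le_iff)
  have th: "?n = length a \<Longrightarrow> x - real ?n = 0" using x by linarith
  show ?thesis
  proof (cases "m = 0")
    case True
    have z: "j < length a \<Longrightarrow> sort a ! j = 0" for j using sa True by fastforce
    have "(\<Sum>j<?n. real (sort a ! j)) = 0" using z nle by (intro sum.neutral) auto
    moreover have "(x - real ?n) * real (sort a ! ?n) = 0"
      using z th nle by (cases "?n < length a") auto
    ultimately show ?thesis using True by simp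
  next
    case False
    then show ?thesis unfolding hdg_poly_def Let_def
      by (simp add: sum_distrib_left distrib_left)
  qed
qed


theorem mainTheorem6:
  fixes scale :: "'k::field \<Rightarrow> 'v::ab_group_add \<Rightarrow> 'v"
    and T :: "'v \<Rightarrow> 'v" and M N :: "'v set" and e h i :: nat and x :: real
  assumes "vector_space scale"
    and "Vector_Spaces.linear scale scale T"
    and "module.subspace scale M" and "T ` M \<subseteq> M"
    and "\<forall>u\<in>M. (T ^^ e) u = 0"
    and "\<exists>g. length g \<le> h \<and> set g \<subseteq> M \<and>
           M = module.span scale {(T ^^ l) (g ! j) | j l. j < length g}"
    and "1 \<le> e" and "1 \<le> h" and "1 \<le> i" and "i \<le> e"
    and "module.subspace scale N" and "N \<subseteq> M" and "T ` N \<subseteq> N"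
    and "\<forall>u\<in>N. (T ^^ i) u = 0"
    and "(T ^^ (e - i)) ` M \<subseteq> N"
    and "0 \<le> x" and "x \<le> real h"
  shows "Hdg scale T M {0} h e x \<ge>
         poly_star i (Hdg scale T N {0} h i) (e - i) (Hdg scale T M N h (e - i)) x"
proof -
  interpret L: nilp scale T by (intro nilp.intro nilp_axioms.intro assms(1) assms(2))
  have sM: "L.subspace M" and TM: "T ` M \<subseteq> M" and sN: "L.subspace N" and NM: "N \<subseteq> M"
    and TN: "T ` N \<subseteq> N" using assms(3) assms(4) assms(11) assms(12) assms(13) by simp_all
  obtain g where g: "length g \<le> h" "set g \<subseteq> M"
    "M = L.span {(T ^^ l) (g ! j) | j l. j < length g}" using assms(6) by blast
  define G where "G = {(T ^^ l) (g ! j) | j l. j < length g}"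
  have gM: "j < length g \<Longrightarrow> g ! j \<in> M" for j using g(2) nth_mem by blast
  have fdM: "L.fd M"
  proof -
    define G0 where "G0 = (\<lambda>(j, l). (T ^^ l) (g ! j)) ` ({..<length g} \<times> {..<e})"
    have "G \<subseteq> L.span G0"
    proof
      fix y assume "y \<in> G"
      then obtain j l where jl: "j < length g" "y = (T ^^ l) (g ! j)" unfolding G_def by blast
      show "y \<in> L.span G0"
      proof (cases "l < e")
        case True
        then have "(j, l) \<in> {..<length g} \<times> {..<e}" using jl by simp
        then have "y \<in> G0" unfolding G0_def using jl by (simp add: image_iff) blast
        then show ?thesis by (rule L.span_base)
      next
        case False
        then have "y = (T ^^ (l - e)) ((T ^^ e) (g ! j))" using jl by (simp add: L.P_comp)
        then have "y = 0" using assms(5) gM[OF jl(1)] by simp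
        then show ?thesis by (simp add: L.span_zero)
      qed
    qed
    then have "L.span G \<subseteq> L.span G0" using L.span_mono[of G "L.span G0"] by (simp add: L.span_span)
    moreover have "finite G0" unfolding G0_def by simp
    moreover have "M = L.span G" using g(3) unfolding G_def .
    ultimately show ?thesis unfolding L.fd_def by blast
  qed
  have s0: "L.subspace {0}" by simp
  have T0: "T ` {0} \<subseteq> {0}" by simp
  have z0: "{0} \<subseteq> M" using L.subspace_0[OF sM] by simp
  have core0: "\<And>t1 t2. L.Dm N {0} t1 + L.Dm M N t2 \<le> L.Dm M {0} (t1 + t2)"
    by (rule L.core[OF sM fdM TM sN NM TN])
  have fdN: "L.fd N" by (rule L.fd_subset[OF fdM]) (use NM L.span_superset[of M] in blast)
  have hM1: "L.Dm M {0} 1 \<le> h"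
  proof -
    have fdTM: "L.fd (T ` M)" using L.fd_image[OF fdM, of 1] by simp
    have "G \<subseteq> L.span (set g \<union> T ` M)"
    proof
      fix y assume "y \<in> G"
      then obtain j l where jl: "j < length g" "y = (T ^^ l) (g ! j)" unfolding G_def by blast
      show "y \<in> L.span (set g \<union> T ` M)"
      proof (cases l)
        case 0
        then show ?thesis using jl by (intro L.span_base) simp
      next
        case (Suc l')
        then have "y = T ((T ^^ l') (g ! j))" using jl by simp
        moreover have "(T ^^ l') (g ! j) \<in> M" using L.P_inv[OF TM gM[OF jl(1)]] .
        ultimately show ?thesis by (intro L.span_base) blast
      qed
    qed
    then have "M \<subseteq> L.span (set g \<union> T ` M)"
      using g(3)[folded G_def] L.span_mono[of G "L.span (set g \<union> T ` M)"] by (simp add: L.span_span)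
    moreover have "L.fd (set g \<union> T ` M)"
      by (rule L.fd_subset[OF fdM]) (use g(2) TM L.span_superset[of M] in blast)
    ultimately have "L.dim M \<le> L.dim (set g \<union> T ` M)" by (intro L.dim_mono')
    also have "\<dots> \<le> card (set g) + L.dim (T ` M)" by (rule L.dim_Un_le[OF _ fdTM]) simp
    also have "\<dots> \<le> h + L.dim (T ` M)" using card_length[of g] g(1) by simp
    finally show ?thesis unfolding L.Dm_def L.dim_Un0 by simp
  qed
  have hN1: "L.Dm N {0} 1 \<le> h" using core0[of 1 0] hM1 by simp
  have hQ1: "L.Dm M N 1 \<le> h" using core0[of 0 1] hM1 by simp
  have topM: "(T ^^ e) ` M \<subseteq> {0}" using assms(5) by auto
  have topN: "(T ^^ i) ` N \<subseteq> {0}" using assms(14) by auto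
  have topQ: "(T ^^ (e - i)) ` M \<subseteq> N" using assms(15) by auto
  have NN: "{0} \<subseteq> N" using L.subspace_0[OF sN] by simp
  note PA = L.Hdg_props[OF sM fdM TM s0 z0 T0 topM hM1]
  note PB = L.Hdg_props[OF sN fdN TN s0 NN T0 topN hN1]
  note PC = L.Hdg_props[OF sM fdM TM sN NM TN topQ hQ1]
  define A where "A = (SOME a. length a = h \<and> cyc_decomp scale T M {0} e a)"
  define B where "B = (SOME a. length a = h \<and> cyc_decomp scale T N {0} i a)"
  define C where "C = (SOME a. length a = h \<and> cyc_decomp scale T M N (e - i) a)"
  have lA: "length A = h" and eA: "\<forall>j<h. A ! j \<le> e" and DA: "\<forall>t. L.Dm M {0} t = (\<Sum>j<h. min (A ! j) t)"
    using PA unfolding A_def by auto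
  have lB: "length B = h" and eB: "\<forall>j<h. B ! j \<le> i" and DB: "\<forall>t. L.Dm N {0} t = (\<Sum>j<h. min (B ! j) t)"
    using PB unfolding B_def by auto
  have lC: "length C = h" and eC: "\<forall>j<h. C ! j \<le> e - i" and DC: "\<forall>t. L.Dm M N t = (\<Sum>j<h. min (C ! j) t)"
    using PC unfolding C_def by auto
  have HA: "Hdg scale T M {0} h e = hdg_poly e A" unfolding Hdg_def A_def ..
  have HB: "Hdg scale T N {0} h i = hdg_poly i B" unfolding Hdg_def B_def ..
  have HC: "Hdg scale T M N h (e - i) = hdg_poly (e - i) C" unfolding Hdg_def C_def ..
  define S where "S X k = (\<Sum>j<k. real (sort X ! j))" for X k
  have ineq: "k \<le> h \<Longrightarrow> S B k + S C k \<le> S A k" for k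
  proof -
    assume k: "k \<le> h"
    have "(\<Sum>j<k. sort B ! j) + (\<Sum>j<k. sort C ! j) \<le> (\<Sum>j<k. sort A ! j)"
      by (rule int_ineq[OF lA lB lC DA DB DC _ k]) (use core0 in blast)
    then have "real ((\<Sum>j<k. sort B ! j) + (\<Sum>j<k. sort C ! j)) \<le> real (\<Sum>j<k. sort A ! j)"
      by (rule of_nat_mono)
    then show ?thesis unfolding S_def by simp
  qed
  define n where "n = nat \<lfloor>x\<rfloor>"
  define th where "th = x - real n"
  have rn: "real n = real_of_int \<lfloor>x\<rfloor>" unfolding n_def using assms(16) by simp
  have th0: "0 \<le> th" unfolding th_def rn by simp
  have th1: "th < 1" unfolding th_def rn by linarith
  have nh: "n \<le> h" unfolding n_def using assms(17) by (simp add: nat_le_iff floor_le_iff)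
  have hA: "real e * hdg_poly e A x = S A n + th * real (sort A ! n)"
    unfolding S_def th_def n_def by (rule hdg_eq) (use lA eA assms(16,17) in auto)
  have hB: "real i * hdg_poly i B x = S B n + th * real (sort B ! n)"
    unfolding S_def th_def n_def by (rule hdg_eq) (use lB eB assms(16,17) in auto)
  have hC: "real (e - i) * hdg_poly (e - i) C x = S C n + th * real (sort C ! n)"
    unfolding S_def th_def n_def by (rule hdg_eq) (use lC eC assms(16,17) in auto)
  have key: "S B n + th * real (sort B ! n) + (S C n + th * real (sort C ! n)) \<le> S A n + th * real (sort A ! n)"
  proof (cases "n < h")
    case True
    define u where "u = S A n - S B n - S C n"
    define w where "w = real (sort A ! n) - real (sort B ! n) - real (sort C ! n)"
    have u0: "0 \<le> u" using ineq[OF nh] unfolding u_def by simp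
    have "S B (Suc n) + S C (Suc n) \<le> S A (Suc n)" using ineq True by simp
    then have uw: "0 \<le> u + w" unfolding u_def w_def S_def by simp
    have p1: "0 \<le> (1 - th) * u" using th1 u0 by simp
    have p2: "0 \<le> th * (u + w)" using th0 uw by simp
    have "u + th * w = (1 - th) * u + th * (u + w)" by (simp add: algebra_simps)
    then have "0 \<le> u + th * w" using p1 p2 by linarith
    then show ?thesis unfolding u_def w_def by (simp add: algebra_simps)
  next
    case False
    then have "n = h" using nh by simp
    then have "real n = real h" by simp
    moreover have "0 \<le> x - real n" using th0 unfolding th_def .
    ultimately have "x - real n = 0" using assms(17) by linarith
    then have "th = 0" unfolding th_def .
    then show ?thesis using ineq[OF nh] by simp
  qed
  have epos: "0 < real e" using assms(7) by simp
  have ie: "real (i + (e - i)) = real e" using assms(10) by simp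
  show ?thesis
    unfolding poly_star_def HA HB HC ie
    using hA hB hC key epos by (simp add: divide_le_eq mult.commute)
qed

end
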